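(* For positive integers $c,r$ define the graphs $Z_{c,r}$ and $Y_{c,r}$ as follows. $Z_{c,r}$ has vertex set $\{z_{i,j}:1\le i\le c,\ 1\le j\le r\}$, and for $i<i'$, $z_{i,j}z_{i',j'}$ is an edge iff (1) $i$ is odd, $i'=i+1$ and $j>j'$; or (2) $i$ is even, $i'=i+1$ and $j\le j'$; or (3) $i$ is even, $i'$ is odd and $i'\ge i+3$. $Y_{c,r}$ has vertex set $\{y_{i,j}:1\le i\le c,\ 1\le j\le r\}$, and $y_{i,j}y_{i',j'}$ is an edge iff (1) $i$ is odd, $i'=i+1$ and $j\ge j'$; or (2) $i$ is even, $i'=i+1$ and $j<j'$; or (3) $i$ is even, $i'$ is odd and $i'\ge i+3$; or (4) $i$ is odd, $i'=i-1$ and $j=1$. Then for every $n\ge1$: $Z_{2n,2n}$ contains $Y_{n,n}$ as an induced subgraph; $Y_{2n,2n}$ contains $Z_{n,n}$ as an induced subgraph; and moreover $Z_{n,n}$ can be embedded as an induced subgraph in $Y_{2n,2n}$ using none of the vertices $y_{i,1}$ ($1\le i\le 2n$) of the bottom row.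
   Context: In these grids, $i$ indexes columns (left to right) and $j$ indexes rows, row $1$ being the bottom row. *)

theory Defs
  imports Main
begin

definition grid :: "nat \<Rightarrow> nat \<Rightarrow> (nat \<times> nat) set" where
  "grid c r = {(i, j). 1 \<le> i \<and> i \<le> c \<and> 1 \<le> j \<and> j \<le> r}"

definition Zcond :: "nat \<times> nat \<Rightarrow> nat \<times> nat \<Rightarrow> bool" where
  "Zcond v w = (case v of (i, j) \<Rightarrow> case w of (i', j') \<Rightarrow>
      i < i' \<and>
      ((odd i \<and> i' = i + 1 \<and> j > j') \<or>
       (even i \<and> i' = i + 1 \<and> j \<le> j') \<or>
       (even i \<and> odd i' \<and> i' \<ge> i + 3)))"

definition Ycond :: "nat \<times> nat \<Rightarrow> nat \<times> nat \<Rightarrow> bool" where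
  "Ycond v w = (case v of (i, j) \<Rightarrow> case w of (i', j') \<Rightarrow>
      (odd i \<and> i' = i + 1 \<and> j \<ge> j') \<or>
      (even i \<and> i' = i + 1 \<and> j < j') \<or>
      (even i \<and> odd i' \<and> i' \<ge> i + 3) \<or>
      (odd i \<and> i' + 1 = i \<and> j = 1))"

definition Zadj :: "nat \<Rightarrow> nat \<Rightarrow> nat \<times> nat \<Rightarrow> nat \<times> nat \<Rightarrow> bool" where
  "Zadj c r v w = (v \<in> grid c r \<and> w \<in> grid c r \<and> (Zcond v w \<or> Zcond w v))"

definition Yadj :: "nat \<Rightarrow> nat \<Rightarrow> nat \<times> nat \<Rightarrow> nat \<times> nat \<Rightarrow> bool" where
  "Yadj c r v w = (v \<in> grid c r \<and> w \<in> grid c r \<and> (Ycond v w \<or> Ycond w v))"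

definition induced_embedding ::
  "('a \<Rightarrow> 'b) \<Rightarrow> 'a set \<Rightarrow> ('a \<Rightarrow> 'a \<Rightarrow> bool) \<Rightarrow> 'b set \<Rightarrow> ('b \<Rightarrow> 'b \<Rightarrow> bool) \<Rightarrow> bool" where
  "induced_embedding f V E V' E' =
     (inj_on f V \<and> f ` V \<subseteq> V' \<and> (\<forall>u\<in>V. \<forall>v\<in>V. E' (f u) (f v) \<longleftrightarrow> E u v))"

end

theory Submission
  imports Defs
begin

definition gZ :: "nat \<times> nat \<Rightarrow> nat \<times> nat" where
  "gZ v = (case v of (i,j) \<Rightarrow> (i, i + j))"

lemma gZ_cond:
  assumes "1 \<le> i" "1 \<le> j" "1 \<le> i'" "1 \<le> j'"
  shows "Ycond (gZ (i,j)) (gZ (i',j')) = Zcond (i,j) (i',j')"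
  using assms unfolding Ycond_def Zcond_def gZ_def by (auto simp: split: if_splits)

definition fY :: "nat \<Rightarrow> nat \<times> nat \<Rightarrow> nat \<times> nat" where
  "fY n v = (case v of (i,j) \<Rightarrow> if j = 1 then (if odd i then (i+2, 1) else (i, 1)) else (i, j + n - i))"

lemma fY_cond:
  assumes "1 \<le> i" "1 \<le> j" "1 \<le> i'" "1 \<le> j'" "i \<le> n" "i' \<le> n" "j \<le> n" "j' \<le> n"
  shows "(Zcond (fY n (i,j)) (fY n (i',j')) \<or> Zcond (fY n (i',j')) (fY n (i,j))) = (Ycond (i,j) (i',j') \<or> Ycond (i',j') (i,j))"
  using assms unfolding Ycond_def Zcond_def fY_def by (cases "j=1"; cases "j'=1"; cases "even i"; cases "even i'"; auto; presburger)

lemma gZ_emb: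
  shows "induced_embedding gZ (grid n n) (Zadj n n) (grid (2*n) (2*n)) (Yadj (2*n) (2*n))
              \<and> (\<forall>v\<in>grid n n. snd (gZ v) \<noteq> 1)"
proof -
  have img: "gZ v \<in> grid (2*n) (2*n)" if "v \<in> grid n n" for v
    using that by (auto simp: grid_def gZ_def)
  have inj: "inj_on gZ (grid n n)"
    by (auto simp: inj_on_def gZ_def)
  have adj: "Yadj (2*n) (2*n) (gZ u) (gZ v) = Zadj n n u v" if "u \<in> grid n n" "v \<in> grid n n" for u v
  proof -
    obtain i j i' j' where u: "u = (i,j)" and v: "v = (i',j')" by fastforce
    have b: "1 \<le> i" "1 \<le> j" "1 \<le> i'" "1 \<le> j'" using that u v by (auto simp: grid_def)
    show ?thesis using img[OF that(1)] img[OF that(2)] that gZ_cond[OF b] gZ_cond[of i' j' i j] b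
      unfolding Yadj_def Zadj_def u v by auto
  qed
  show ?thesis unfolding induced_embedding_def using img inj adj
    by (auto simp: grid_def gZ_def)
qed

lemma fY_emb:
  assumes "n \<ge> 2"
  shows "induced_embedding (fY n) (grid n n) (Yadj n n) (grid (2*n) (2*n)) (Zadj (2*n) (2*n))"
proof -
  have img: "fY n v \<in> grid (2*n) (2*n)" if "v \<in> grid n n" for v
    using that assms by (auto simp: grid_def fY_def split: if_splits)
  have inj: "inj_on (fY n) (grid n n)"
    by (auto simp: inj_on_def fY_def grid_def split: if_splits)
  have adj: "Zadj (2*n) (2*n) (fY n u) (fY n v) = Yadj n n u v" if "u \<in> grid n n" "v \<in> grid n n" for u v
  proof -
    obtain i j i' j' where u: "u = (i,j)" and v: "v = (i',j')" by fastforce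
    have b: "1 \<le> i" "1 \<le> j" "1 \<le> i'" "1 \<le> j'" "i \<le> n" "i' \<le> n" "j \<le> n" "j' \<le> n"
      using that u v by (auto simp: grid_def)
    show ?thesis using img[OF that(1)] img[OF that(2)] that fY_cond[OF b]
      unfolding Yadj_def Zadj_def u v by auto
  qed
  show ?thesis unfolding induced_embedding_def using img inj adj by auto
qed

lemma one_emb:
  "induced_embedding id (grid 1 1) (Yadj 1 1) (grid (2*1) (2*1)) (Zadj (2*1) (2*1))"
proof -
  have g: "grid 1 1 = {(1,1)}" by (auto simp: grid_def)
  show ?thesis unfolding induced_embedding_def g
    by (auto simp: Yadj_def Zadj_def Ycond_def Zcond_def grid_def)
qed

theorem lemma10:
  fixes n :: nat
  assumes "n \<ge> 1"
  shows "(\<exists>f. induced_embedding f (grid n n) (Yadj n n) (grid (2*n) (2*n)) (Zadj (2*n) (2*n)))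
       \<and> (\<exists>f. induced_embedding f (grid n n) (Zadj n n) (grid (2*n) (2*n)) (Yadj (2*n) (2*n)))
       \<and> (\<exists>f. induced_embedding f (grid n n) (Zadj n n) (grid (2*n) (2*n)) (Yadj (2*n) (2*n))
              \<and> (\<forall>v\<in>grid n n. snd (f v) \<noteq> 1))"
proof -
  have A: "\<exists>f. induced_embedding f (grid n n) (Yadj n n) (grid (2*n) (2*n)) (Zadj (2*n) (2*n))"
  proof (cases "n = 1")
    case True then show ?thesis using one_emb by blast
  next
    case False then have "n \<ge> 2" using assms by simp
    then show ?thesis using fY_emb by blast
  qed
  show ?thesis using A gZ_emb[of n] by blast
qed

end
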